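(* Let $(X,m)$, $X=\{x_1,\ldots,x_n\}\subset\mathbb{R}^N$, be a configuration of particles with nonzero masses, exponent $a\neq0$ and nonzero total mass $\mu_0$. Then $(X,m)$ is a central configuration if and only if there exists $\lambda\in\mathbb{R}$ such that, with $S_{ij}=s_{ij}^a-\lambda/\mu_0$ for $i\neq j$ and $S_{jj}=-\frac{1}{m_j}\sum_{i\neq j}m_iS_{ij}$, \[\sum_{i=1}^n\sum_{k=1}^n m_im_kS_{ij}S_{kl}s_{ik}=0\quad\text{for all } j,l=1,\ldots,n.\]
   Context: $s_{ij}=\overrightarrow{x_ix_j}^2$ (so $s_{ii}=0$). Accelerations are $\overrightarrow{\gamma}_j=-\sum_{i\neq j}m_is_{ij}^a\overrightarrow{x_ix_j}$, and $(X,m)$ is central if there exist a vector $\overrightarrow{\gamma}_O$, a point $x_O$ and a real $\lambda$ with $\overrightarrow{\gamma}_j-\overrightarrow{\gamma}_O=\lambda\overrightarrow{x_Ox_j}$ for all $j$. *)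

theory Defs
  imports "HOL-Analysis.Analysis"
begin

definition sq_dist :: "(nat \<Rightarrow> 'a::euclidean_space) \<Rightarrow> nat \<Rightarrow> nat \<Rightarrow> real" where
  "sq_dist x i j = (norm (x j - x i))^2"

definition accel :: "real \<Rightarrow> nat \<Rightarrow> (nat \<Rightarrow> real) \<Rightarrow> (nat \<Rightarrow> 'a::euclidean_space) \<Rightarrow> nat \<Rightarrow> 'a" where
  "accel a n m x j = - (\<Sum>i\<in>{..<n} - {j}. (m i * (sq_dist x i j powr a)) *\<^sub>R (x j - x i))"

definition central_config :: "real \<Rightarrow> nat \<Rightarrow> (nat \<Rightarrow> real) \<Rightarrow> (nat \<Rightarrow> 'a::euclidean_space) \<Rightarrow> bool" where
  "central_config a n m x \<longleftrightarrow>
     (\<exists>(\<gamma>O::'a) (xO::'a) (lam::real). \<forall>j<n. accel a n m x j - \<gamma>O = lam *\<^sub>R (x j - xO))"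

definition total_mass :: "nat \<Rightarrow> (nat \<Rightarrow> real) \<Rightarrow> real" where
  "total_mass n m = (\<Sum>i<n. m i)"

definition S_off :: "real \<Rightarrow> nat \<Rightarrow> (nat \<Rightarrow> real) \<Rightarrow> (nat \<Rightarrow> 'a::euclidean_space) \<Rightarrow> real \<Rightarrow> nat \<Rightarrow> nat \<Rightarrow> real" where
  "S_off a n m x lam i j = sq_dist x i j powr a - lam / total_mass n m"

definition S_mat :: "real \<Rightarrow> nat \<Rightarrow> (nat \<Rightarrow> real) \<Rightarrow> (nat \<Rightarrow> 'a::euclidean_space) \<Rightarrow> real \<Rightarrow> nat \<Rightarrow> nat \<Rightarrow> real" where
  "S_mat a n m x lam i j =
     (if i = j then - (1 / m j) * (\<Sum>k\<in>{..<n} - {j}. m k * S_off a n m x lam k j)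
      else S_off a n m x lam i j)"

end

theory Submission
  imports Defs
begin

lemma colsum:
  assumes "j < n" "m j \<noteq> 0"
  shows "(\<Sum>i<n. m i * S_mat a n m x lam i j) = 0"
proof -
  have "{..<n} = insert j ({..<n} - {j})" using assms by auto
  hence "(\<Sum>i<n. m i * S_mat a n m x lam i j) =
     m j * S_mat a n m x lam j j + (\<Sum>i\<in>{..<n}-{j}. m i * S_mat a n m x lam i j)"
    by (metis (no_types, lifting) Diff_iff finite_Diff finite_lessThan singletonI sum.insert)
  also have "(\<Sum>i\<in>{..<n}-{j}. m i * S_mat a n m x lam i j) = (\<Sum>i\<in>{..<n}-{j}. m i * S_off a n m x lam i j)"
    by (rule sum.cong) (auto simp: S_mat_def)
  finally show ?thesis using assms(2) by (simp add: S_mat_def)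
qed

lemma quad:
  fixes x :: "nat \<Rightarrow> 'a::euclidean_space"
  assumes "(\<Sum>i<n. w i) = 0" "(\<Sum>k<n. u k) = 0"
  shows "(\<Sum>i<n. \<Sum>k<n. w i * u k * sq_dist x i k)
     = -2 * ((\<Sum>i<n. w i *\<^sub>R x i) \<bullet> (\<Sum>k<n. u k *\<^sub>R x k))"
proof -
  have e: "sq_dist x i k = x i \<bullet> x i - 2 * (x i \<bullet> x k) + x k \<bullet> x k" for i k
    unfolding sq_dist_def power2_norm_eq_inner by (simp add: inner_diff_left inner_diff_right inner_commute)
  have calc: "((\<Sum>i<n. w i *\<^sub>R x i) \<bullet> (\<Sum>k<n. u k *\<^sub>R x k)) = (\<Sum>i<n. \<Sum>k<n. w i * u k * (x i \<bullet> x k))"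
  proof -
    have "((\<Sum>i<n. w i *\<^sub>R x i) \<bullet> (\<Sum>k<n. u k *\<^sub>R x k)) = (\<Sum>i<n. (w i *\<^sub>R x i) \<bullet> (\<Sum>k<n. u k *\<^sub>R x k))"
    by (rule inner_sum_left)
  also have "\<dots> = (\<Sum>i<n. \<Sum>k<n. w i * u k * (x i \<bullet> x k))"
    by (simp add: inner_sum_right sum_distrib_left mult_ac)
    finally show ?thesis .
  qed
  have t1: "(\<Sum>i<n. \<Sum>k<n. w i * u k * (x i \<bullet> x i)) = 0"
  proof -
    have "(\<Sum>i<n. \<Sum>k<n. w i * u k * (x i \<bullet> x i)) = (\<Sum>i<n. w i * (x i \<bullet> x i) * (\<Sum>k<n. u k))"
      by (intro sum.cong refl) (simp add: sum_distrib_right sum_distrib_left mult_ac)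
    thus ?thesis using assms(2) by simp
  qed
  have t3: "(\<Sum>i<n. \<Sum>k<n. w i * u k * (x k \<bullet> x k)) = 0"
    using assms(1) by (simp add: sum_distrib_right[symmetric] mult.assoc sum.swap[of _ "{..<n}"])
  have "(\<Sum>i<n. \<Sum>k<n. w i * u k * sq_dist x i k)
     = (\<Sum>i<n. \<Sum>k<n. w i * u k * (x i \<bullet> x i)) - 2 * (\<Sum>i<n. \<Sum>k<n. w i * u k * (x i \<bullet> x k))
       + (\<Sum>i<n. \<Sum>k<n. w i * u k * (x k \<bullet> x k))"
    by (simp add: e algebra_simps sum.distrib sum_subtractf sum_distrib_left)
  also have "\<dots> = - 2 * (\<Sum>i<n. \<Sum>k<n. w i * u k * (x i \<bullet> x k))" using t1 t3 by simp
  finally show ?thesis unfolding calc .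
qed

lemma accel_full:
  "accel a n m x j = - (\<Sum>i<n. (m i * (sq_dist x i j powr a)) *\<^sub>R (x j - x i))"
proof -
  have "(\<Sum>i\<in>{..<n} - {j}. (m i * (sq_dist x i j powr a)) *\<^sub>R (x j - x i))
      = (\<Sum>i<n. (m i * (sq_dist x i j powr a)) *\<^sub>R (x j - x i))"
    by (rule sum.mono_neutral_left) auto
  thus ?thesis by (simp add: accel_def)
qed

lemma momentum:
  "(\<Sum>j<n. m j *\<^sub>R accel a n m x j) = 0"
proof -
  define f where "f i j = (m j * m i * (sq_dist x i j powr a)) *\<^sub>R (x j - x i)" for i j
  have sym: "sq_dist x i j = sq_dist x j i" for i j
    unfolding sq_dist_def by (simp add: norm_minus_commute)
  have anti: "f j i = - f i j" for i j
    unfolding f_def using sym[of i j] by (simp add: algebra_simps)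
  have T: "(\<Sum>j<n. m j *\<^sub>R accel a n m x j) = - (\<Sum>j<n. \<Sum>i<n. f i j)"
    by (simp add: accel_full f_def scaleR_sum_right sum_negf mult.assoc)
  have "(\<Sum>j<n. \<Sum>i<n. f i j) = (\<Sum>i<n. \<Sum>j<n. f i j)" by (rule sum.swap)
  also have "\<dots> = (\<Sum>i<n. \<Sum>j<n. - f j i)" by (intro sum.cong refl) (metis anti minus_minus)
  also have "\<dots> = - (\<Sum>j<n. \<Sum>i<n. f i j)" by (simp add: sum_negf)
  finally have "(\<Sum>j<n. \<Sum>i<n. f i j) + (\<Sum>j<n. \<Sum>i<n. f i j) = 0"
    by (simp add: eq_neg_iff_add_eq_0)
  hence "(2::real) *\<^sub>R (\<Sum>j<n. \<Sum>i<n. f i j) = 0" by (simp add: scaleR_2)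
  hence "(\<Sum>j<n. \<Sum>i<n. f i j) = 0" by simp
  thus ?thesis using T by simp
qed

lemma vform:
  fixes x :: "nat \<Rightarrow> 'a::euclidean_space"
  assumes "j < n" "m j \<noteq> 0"
  shows "(\<Sum>i<n. (m i * S_mat a n m x lam i j) *\<^sub>R x i) =
     accel a n m x j - (lam / total_mass n m) *\<^sub>R ((\<Sum>i<n. m i *\<^sub>R x i) - total_mass n m *\<^sub>R x j)"
proof -
  let ?w = "\<lambda>i. m i * S_mat a n m x lam i j"
  have z: "(\<Sum>i<n. ?w i) = 0" using colsum assms by blast
  have "(\<Sum>i<n. ?w i *\<^sub>R x i) = (\<Sum>i<n. ?w i *\<^sub>R (x i - x j))"
    using z by (simp add: scaleR_diff_right sum_subtractf scaleR_sum_left[symmetric])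
  also have "\<dots> = (\<Sum>i\<in>{..<n}-{j}. ?w i *\<^sub>R (x i - x j))"
    by (rule sum.mono_neutral_right) auto
  also have "\<dots> = (\<Sum>i\<in>{..<n}-{j}. (m i * (sq_dist x i j powr a)) *\<^sub>R (x i - x j)
                   - (lam / total_mass n m) *\<^sub>R (m i *\<^sub>R (x i - x j)))"
    by (rule sum.cong) (auto simp: S_mat_def S_off_def algebra_simps)
  also have "\<dots> = (\<Sum>i\<in>{..<n}-{j}. (m i * (sq_dist x i j powr a)) *\<^sub>R (x i - x j))
                   - (lam / total_mass n m) *\<^sub>R (\<Sum>i\<in>{..<n}-{j}. m i *\<^sub>R (x i - x j))"
    by (simp add: sum_subtractf scaleR_sum_right)
  also have "(\<Sum>i\<in>{..<n}-{j}. m i *\<^sub>R (x i - x j)) = (\<Sum>i<n. m i *\<^sub>R (x i - x j))"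
    by (rule sum.mono_neutral_left) auto
  also have "\<dots> = (\<Sum>i<n. m i *\<^sub>R x i) - total_mass n m *\<^sub>R x j"
    by (simp add: total_mass_def scaleR_diff_right sum_subtractf scaleR_sum_left)
  also have "(\<Sum>i\<in>{..<n}-{j}. (m i * (sq_dist x i j powr a)) *\<^sub>R (x i - x j)) = accel a n m x j"
    by (simp add: accel_def sum_negf[symmetric] scaleR_diff_right)
  finally show ?thesis .
qed

theorem corollaryB1:
  fixes x :: "nat \<Rightarrow> 'a::euclidean_space" and m :: "nat \<Rightarrow> real" and a :: real and n :: nat
  assumes "inj_on x {..<n}"
    and "\<forall>i<n. m i \<noteq> 0"
    and "a \<noteq> 0"
    and "total_mass n m \<noteq> 0"
  shows "central_config a n m x \<longleftrightarrow>
    (\<exists>lam::real. \<forall>j<n. \<forall>l<n.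
       (\<Sum>i<n. \<Sum>k<n. m i * m k * S_mat a n m x lam i j * S_mat a n m x lam k l * sq_dist x i k) = 0)"
proof -
  let ?mu = "total_mass n m"
  let ?P = "\<Sum>i<n. m i *\<^sub>R x i"
  let ?v = "\<lambda>lam j. (\<Sum>i<n. (m i * S_mat a n m x lam i j) *\<^sub>R x i)"
  have Q: "(\<Sum>i<n. \<Sum>k<n. m i * m k * S_mat a n m x lam i j * S_mat a n m x lam k l * sq_dist x i k)
      = -2 * (?v lam j \<bullet> ?v lam l)" if "j < n" "l < n" for lam j l
  proof -
    have "(\<Sum>i<n. \<Sum>k<n. m i * m k * S_mat a n m x lam i j * S_mat a n m x lam k l * sq_dist x i k)
        = (\<Sum>i<n. \<Sum>k<n. (m i * S_mat a n m x lam i j) * (m k * S_mat a n m x lam k l) * sq_dist x i k)"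
      by (simp add: algebra_simps)
    also have "\<dots> = -2 * (?v lam j \<bullet> ?v lam l)"
      by (rule quad[OF colsum colsum]) (use that assms(2) in auto)
    finally show ?thesis .
  qed
  show ?thesis
  proof
    assume "central_config a n m x"
    then obtain gO xO lam where c: "\<forall>j<n. accel a n m x j - gO = lam *\<^sub>R (x j - xO)"
      unfolding central_config_def by blast
    have "0 = (\<Sum>j<n. m j *\<^sub>R accel a n m x j)" using momentum by simp
    also have "\<dots> = (\<Sum>j<n. m j *\<^sub>R (gO + lam *\<^sub>R (x j - xO)))"
    proof (rule sum.cong[OF refl])
      fix j assume "j \<in> {..<n}"
      hence "accel a n m x j = gO + lam *\<^sub>R (x j - xO)" using c by (simp add: algebra_simps)
      thus "m j *\<^sub>R accel a n m x j = m j *\<^sub>R (gO + lam *\<^sub>R (x j - xO))" by simp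
    qed
    also have "\<dots> = (\<Sum>j<n. m j *\<^sub>R gO) + (\<Sum>j<n. lam *\<^sub>R (m j *\<^sub>R x j)) - (\<Sum>j<n. (lam * m j) *\<^sub>R xO)"
    proof -
      have pw: "\<And>j. m j *\<^sub>R (gO + lam *\<^sub>R (x j - xO)) = m j *\<^sub>R gO + lam *\<^sub>R (m j *\<^sub>R x j) - (lam * m j) *\<^sub>R xO"
        by (simp add: algebra_simps)
      show ?thesis by (simp only: pw sum.distrib sum_subtractf)
    qed
    also have "\<dots> = ?mu *\<^sub>R gO + lam *\<^sub>R ?P - (lam * ?mu) *\<^sub>R xO"
      by (simp only: scaleR_sum_left[symmetric] scaleR_sum_right[symmetric] sum_distrib_left[symmetric] total_mass_def)
    finally have eq0: "0 = ?mu *\<^sub>R gO + lam *\<^sub>R ?P - (lam * ?mu) *\<^sub>R xO" .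
    have v0: "?v (-lam) j = 0" if "j < n" for j
    proof -
      have e1: "?v (-lam) j = accel a n m x j - (-lam / ?mu) *\<^sub>R (?P - ?mu *\<^sub>R x j)"
        using vform that assms(2) by blast
      have e2: "accel a n m x j = gO + lam *\<^sub>R (x j - xO)" using c that by (simp add: algebra_simps)
      have hm: "?mu *\<^sub>R ((-lam / ?mu) *\<^sub>R y) = (-lam) *\<^sub>R y" for y :: 'a using assms(4) by (simp add: scaleR_scaleR)
      have "?mu *\<^sub>R ?v (-lam) j = ?mu *\<^sub>R (gO + lam *\<^sub>R (x j - xO)) - ?mu *\<^sub>R ((-lam / ?mu) *\<^sub>R (?P - ?mu *\<^sub>R x j))"
        unfolding e1 e2 by (simp add: scaleR_diff_right)
      also have "\<dots> = ?mu *\<^sub>R gO + lam *\<^sub>R ?P - (lam * ?mu) *\<^sub>R xO"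
        unfolding hm by (simp add: algebra_simps)
      also have "\<dots> = 0" using eq0 by simp
      finally show ?thesis using assms(4) by simp
    qed
    show "\<exists>lam. \<forall>j<n. \<forall>l<n. (\<Sum>i<n. \<Sum>k<n. m i * m k * S_mat a n m x lam i j * S_mat a n m x lam k l * sq_dist x i k) = 0"
    proof (intro exI[of _ "-lam"] allI impI)
      fix j l assume "j < n" "l < n"
      thus "(\<Sum>i<n. \<Sum>k<n. m i * m k * S_mat a n m x (-lam) i j * S_mat a n m x (-lam) k l * sq_dist x i k) = 0"
        using Q[of j l "-lam"] v0[of j] by simp
    qed
  next
    assume "\<exists>lam. \<forall>j<n. \<forall>l<n. (\<Sum>i<n. \<Sum>k<n. m i * m k * S_mat a n m x lam i j * S_mat a n m x lam k l * sq_dist x i k) = 0"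
    then obtain lam where h: "\<forall>j<n. \<forall>l<n. (\<Sum>i<n. \<Sum>k<n. m i * m k * S_mat a n m x lam i j * S_mat a n m x lam k l * sq_dist x i k) = 0" by blast
    have "accel a n m x j - (lam / ?mu) *\<^sub>R ?P = (- lam) *\<^sub>R (x j - 0)" if "j < n" for j
    proof -
      have "(\<Sum>i<n. \<Sum>k<n. m i * m k * S_mat a n m x lam i j * S_mat a n m x lam k j * sq_dist x i k) = 0"
        using h that by blast
      hence "?v lam j \<bullet> ?v lam j = 0" using Q[OF that that, of lam] by simp
      hence "?v lam j = 0" by simp
      hence "accel a n m x j - (lam / ?mu) *\<^sub>R (?P - ?mu *\<^sub>R x j) = 0"
        using vform[of j n m a x lam] that assms(2) by simp
      thus ?thesis using assms(4) by (simp add: algebra_simps)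
    qed
    thus "central_config a n m x" unfolding central_config_def by blast
  qed
qed

end
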